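(* Let $p\in(0,1)$, $\beta\in\mathbb{R}$, $l\ge1$ and $1\le n\le l$ be fixed, let $\theta=0$, and for $k\in\{0,\dots,3^n-1\}$ set $\alpha=\frac{k}{3^n}$. There exists a polynomial $R_{p,\beta,\frac{k}{3^n},0}$ of degree $3^n$ such that $$\sigma\Big(H^{(l)}_{p,\beta,\frac{k}{3^n},0}\Big)=R^{-1}_{p,\beta,\frac{k}{3^n},0}\Big(\sigma(\Delta_p^{(l-n)})\setminus\sigma(\Delta^{(0)})\Big)\ \cup\ \sigma\Big(H^{(n)}_{p,\beta,\frac{k}{3^n},0}\Big).$$ Furthermore, for $n=1$ and $k\in\{1,2\}$ the polynomial is $$R_{p,\beta,\frac{k}{3},0}(z)=\frac{(-\beta+2p-2z)\,(\beta^2+2\beta p+\beta z-2pz-2p-2z^2+2)}{4p(1-p)}.$$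
   Context: For $x\in\mathbb{Z}_+\setminus\{0\}$ let $m(x)$ be the largest integer $m\ge0$ with $3^m\mid x$. For $x\ge1$ set $p(x,x-1)=1-p,\ p(x,x+1)=p$ if $3^{-m(x)}x\equiv1\pmod3$, and $p(x,x-1)=p,\ p(x,x+1)=1-p$ if $3^{-m(x)}x\equiv2\pmod3$. Let $V_l=\{0,1,\dots,3^l\}$. The level-$l$ self-similar almost Mathieu operator $H^{(l)}_{p,\beta,\alpha,\theta}$ acts on $f:V_l\to\mathbb{C}$ by $(H^{(l)}f)(0)=\beta\cos(\theta)f(0)-f(1)$, $(H^{(l)}f)(3^l)=\beta\cos(2\pi\alpha3^l+\theta)f(3^l)-f(3^l-1)$, and for $1\le x\le 3^l-1$: $(H^{(l)}f)(x)=\beta\cos(2\pi\alpha x+\theta)f(x)-p(x,x-1)f(x-1)-p(x,x+1)f(x+1)$; it is regarded as a $(3^l+1)\times(3^l+1)$ matrix and $\sigma$ denotes its set of eigenvalues. The level-$l$ Laplacian $\Delta^{(l)}_p$ on $V_l$ is $(\Delta^{(l)}_pf)(0)=f(0)-f(1)$, $(\Delta_p^{(l)}f)(x)=f(x)-p(x,x-1)f(x-1)-p(x,x+1)f(x+1)$ for $1\le x\le3^l-1$, and $(\Delta^{(l)}_pf)(3^l)=f(3^l)-f(3^l-1)$; in particular $\Delta^{(0)}=\begin{pmatrix}1&-1\\-1&1\end{pmatrix}$, with $\sigma(\Delta^{(0)})=\{0,2\}$. For a polynomial $R$ and a set $A$, $R^{-1}(A)=\{z\in\mathbb{C}: R(z)\in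 A\}$. *)

theory Defs
  imports Complex_Main "HOL-Computational_Algebra.Polynomial"
begin

definition m3 :: "nat \<Rightarrow> nat" where
  "m3 x = (GREATEST m. (3::nat) ^ m dvd x)"

definition trans_p :: "real \<Rightarrow> nat \<Rightarrow> nat \<Rightarrow> real" where
  "trans_p p x y =
     (let r = (x div 3 ^ m3 x) mod 3 in
      if y + 1 = x then (if r = 1 then 1 - p else if r = 2 then p else 0)
      else if y = x + 1 then (if r = 1 then p else if r = 2 then 1 - p else 0)
      else 0)"

text \<open>Matrix of the level-l self-similar almost Mathieu operator on V_l = {0..3^l},
  indexed by i, j \<in> {0..3^l}: (H f)(i) = \<Sum>j. H i j * f j.\<close>
definition H_mat :: "real \<Rightarrow> real \<Rightarrow> real \<Rightarrow> real \<Rightarrow> nat \<Rightarrow> nat \<Rightarrow> nat \<Rightarrow> real" where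
  "H_mat p \<beta> \<alpha> \<theta> l i j =
     (if i = 0 then (if j = 0 then \<beta> * cos \<theta> else if j = 1 then -1 else 0)
      else if i = 3 ^ l then
        (if j = 3 ^ l then \<beta> * cos (2 * pi * \<alpha> * 3 ^ l + \<theta>)
         else if j + 1 = 3 ^ l then -1 else 0)
      else (if j = i then \<beta> * cos (2 * pi * \<alpha> * real i + \<theta>)
            else if j + 1 = i \<or> j = i + 1 then - trans_p p i j else 0))"

definition Lap_mat :: "real \<Rightarrow> nat \<Rightarrow> nat \<Rightarrow> nat \<Rightarrow> real" where
  "Lap_mat p l i j =
     (if i = 0 then (if j = 0 then 1 else if j = 1 then -1 else 0)
      else if i = 3 ^ l then
        (if j = 3 ^ l then 1 else if j + 1 = 3 ^ l then -1 else 0)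
      else (if j = i then 1
            else if j + 1 = i \<or> j = i + 1 then - trans_p p i j else 0))"

definition mat_spec :: "nat \<Rightarrow> (nat \<Rightarrow> nat \<Rightarrow> real) \<Rightarrow> complex set" where
  "mat_spec N A = {z. \<exists>f :: nat \<Rightarrow> complex. (\<exists>x\<le>N. f x \<noteq> 0) \<and>
       (\<forall>i\<le>N. (\<Sum>j\<le>N. complex_of_real (A i j) * f j) = z * f i)}"

definition sigma_H :: "real \<Rightarrow> real \<Rightarrow> real \<Rightarrow> real \<Rightarrow> nat \<Rightarrow> complex set" where
  "sigma_H p \<beta> \<alpha> \<theta> l = mat_spec (3 ^ l) (H_mat p \<beta> \<alpha> \<theta> l)"

definition sigma_Lap :: "real \<Rightarrow> nat \<Rightarrow> complex set" where
  "sigma_Lap p l = mat_spec (3 ^ l) (Lap_mat p l)"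

definition poly_preimage :: "real poly \<Rightarrow> complex set \<Rightarrow> complex set" where
  "poly_preimage R A = {z. poly (map_poly complex_of_real R) z \<in> A}"

end

theory Submission
  imports Defs
begin


fun tr :: "(nat \<Rightarrow> complex) \<Rightarrow> (nat \<Rightarrow> complex) \<Rightarrow> (nat \<Rightarrow> complex) \<Rightarrow> complex \<Rightarrow> complex \<Rightarrow> complex \<Rightarrow> nat \<Rightarrow> complex" where
  "tr a b V z u v 0 = u"
| "tr a b V z u v (Suc 0) = v"
| "tr a b V z u v (Suc (Suc y)) = ((V (Suc y) - z) * tr a b V z u v (Suc y) - a (Suc y) * tr a b V z u v y) / b (Suc y)"

lemma tr_step:
  assumes "1 \<le> y" "b y \<noteq> 0"
  shows "b y * tr a b V z u v (y+1) = (V y - z) * tr a b V z u v y - a y * tr a b V z u v (y - 1)"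
proof -
  obtain x where y: "y = Suc x" using assms by (cases y) auto
  show ?thesis using assms unfolding y by simp
qed

lemma tr_lin: "tr a b V z u v y = u * tr a b V z 1 0 y + v * tr a b V z 0 1 y"
proof (induction a b V z u v y rule: tr.induct)
  case (3 a b V z u v y)
  let ?A = "tr a b V z 1 0" and ?B = "tr a b V z 0 1"
  have "tr a b V z u v (Suc (Suc y)) = ((V (Suc y) - z) * (u * ?A (Suc y) + v * ?B (Suc y)) - a (Suc y) * (u * ?A y + v * ?B y)) / b (Suc y)"
    using 3 by simp
  also have "\<dots> = u * (((V (Suc y) - z) * ?A (Suc y) - a (Suc y) * ?A y) / b (Suc y)) + v * (((V (Suc y) - z) * ?B (Suc y) - a (Suc y) * ?B y) / b (Suc y))"
    by (simp add: divide_simps) (simp add: algebra_simps)?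
  finally show ?case by simp
qed simp_all

lemma tr_unique0:
  assumes rec: "\<And>y. 1 \<le> y \<Longrightarrow> y < M \<Longrightarrow> b y * h (y+1) = (V y - z) * h y - a y * h (y - 1)"
    and bnz: "\<And>y. 1 \<le> y \<Longrightarrow> y < M \<Longrightarrow> b y \<noteq> 0"
    and hu: "h 0 = u" and hv: "h 1 = v"
  shows "y \<le> M \<Longrightarrow> h y = tr a b V z u v y"
proof (induction y rule: nat_less_induct)
  case (1 y)
  show ?case
  proof (cases y)
    case 0 then show ?thesis using hu by simp
  next
    case (Suc x)
    show ?thesis
    proof (cases x)
      case 0 then show ?thesis using Suc hv by simp
    next
      case (Suc w)
      have h1: "h (Suc w) = tr a b V z u v (Suc w)" using 1 \<open>y = Suc x\<close> Suc by simp
      have h2: "h w = tr a b V z u v w" using 1 \<open>y = Suc x\<close> Suc by simp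
      have r: "b (Suc w) * h (Suc w + 1) = (V (Suc w) - z) * h (Suc w) - a (Suc w) * h (Suc w - 1)"
        using rec[of "Suc w"] 1 \<open>y = Suc x\<close> Suc by simp
      have bn: "b (Suc w) \<noteq> 0" using bnz[of "Suc w"] 1 \<open>y = Suc x\<close> Suc by simp
      have "h (Suc (Suc w)) = ((V (Suc w) - z) * h (Suc w) - a (Suc w) * h w) / b (Suc w)"
        using r bn by (simp add: eq_divide_eq mult.commute)
      then show ?thesis using h1 h2 \<open>y = Suc x\<close> Suc by simp
    qed
  qed
qed

lemma tr_unique:
  assumes rec: "\<And>y. 1 \<le> y \<Longrightarrow> y < M \<Longrightarrow> b y * h (y+1) = (V y - z) * h y - a y * h (y - 1)"
    and bnz: "\<And>y. 1 \<le> y \<Longrightarrow> y < M \<Longrightarrow> b y \<noteq> 0"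
  shows "y \<le> M \<Longrightarrow> h y = tr a b V z (h 0) (h 1) y"
  using tr_unique0[OF rec bnz refl refl] by blast

definition tridiag :: "nat \<Rightarrow> real \<Rightarrow> real \<Rightarrow> (nat \<Rightarrow> real) \<Rightarrow> (nat \<Rightarrow> real) \<Rightarrow> (nat \<Rightarrow> real) \<Rightarrow> nat \<Rightarrow> nat \<Rightarrow> real" where
  "tridiag L V0 VL V a b i j =
    (if i = 0 then (if j = 0 then V0 else if j = 1 then -1 else 0)
     else if i = L then (if j = L then VL else if j+1 = L then -1 else 0)
     else (if j = i then V i else if j + 1 = i then - a i else if j = i+1 then - b i else 0))"

lemma row_sum:
  fixes f :: "nat \<Rightarrow> complex"
  assumes "1 \<le> L" "i \<le> L"
  shows "(\<Sum>j\<le>L. complex_of_real (tridiag L V0 VL V a b i j) * f j) =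
     (if i = 0 then V0 * f 0 - f 1 else if i = L then VL * f L - f (L - 1)
      else V i * f i - a i * f (i - 1) - b i * f (i+1))"
proof -
  consider "i = 0" | "i = L" "i \<noteq> 0" | "0 < i" "i < L" using assms by linarith
  then show ?thesis
  proof cases
    case 1
    have "\<And>j. complex_of_real (tridiag L V0 VL V a b i j) * f j =
       (if j = 0 then V0 * f 0 else 0) + (if j = 1 then - f 1 else 0)"
      using 1 by (simp add: tridiag_def)
    then show ?thesis using 1 assms by (simp add: sum.distrib)
  next
    case 2
    have "\<And>j. complex_of_real (tridiag L V0 VL V a b i j) * f j =
       (if j = L then VL * f L else 0) + (if j = L - 1 then - f (L - 1) else 0)"
      using 2 by (auto simp add: tridiag_def)
    then show ?thesis using 2 assms by (simp add: sum.distrib)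
  next
    case 3
    have "\<And>j. complex_of_real (tridiag L V0 VL V a b i j) * f j =
       (if j = i then V i * f i else 0) + (if j = i - 1 then - a i * f (i - 1) else 0)
        + (if j = i + 1 then - b i * f (i + 1) else 0)"
      using 3 by (auto simp add: tridiag_def)
    then show ?thesis using 3 assms by (simp add: sum.distrib)
  qed
qed

abbreviation cr :: "(nat \<Rightarrow> real) \<Rightarrow> nat \<Rightarrow> complex" where
  "cr f \<equiv> (\<lambda>x. complex_of_real (f x))"

lemma chain_spec:
  assumes L: "1 \<le> L" and bnz: "\<And>i. 0 < i \<Longrightarrow> i < L \<Longrightarrow> b i \<noteq> 0"
  shows "z \<in> mat_spec L (tridiag L V0 VL V a b) \<longleftrightarrow>
     (of_real VL - z) * tr (cr a) (cr b) (cr V) z 1 (of_real V0 - z) L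
       - tr (cr a) (cr b) (cr V) z 1 (of_real V0 - z) (L - 1) = 0"
    (is "_ \<longleftrightarrow> ?E")
proof
  let ?f = "tr (cr a) (cr b) (cr V) z 1 (of_real V0 - z)"
  assume "z \<in> mat_spec L (tridiag L V0 VL V a b)"
  then obtain g where g0: "\<exists>x\<le>L. g x \<noteq> 0"
    and ev: "\<And>i. i \<le> L \<Longrightarrow> (\<Sum>j\<le>L. complex_of_real (tridiag L V0 VL V a b i j) * g j) = z * g i"
    unfolding mat_spec_def by blast
  have rows: "\<And>i. i \<le> L \<Longrightarrow> (if i = 0 then V0 * g 0 - g 1 else if i = L then VL * g L - g (L - 1)
      else V i * g i - a i * g (i - 1) - b i * g (i+1)) = z * g i"
    by (subst row_sum[OF L, symmetric]) (assumption, erule ev)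
  have g1: "g 1 = (of_real V0 - z) * g 0" using rows[of 0] L by (simp add: algebra_simps)
  have gi: "g y = g 0 * ?f y" if "y \<le> L" for y
  proof -
    have "g y = tr (cr a) (cr b) (cr V) z (g 0) (g 1) y"
    proof (rule tr_unique[where M = L])
      fix y assume "1 \<le> y" "y < L"
      then show "cr b y * g (y + 1) = (cr V y - z) * g y - cr a y * g (y - 1)"
        using rows[of y] by (simp add: algebra_simps)
    next
      fix y assume "1 \<le> y" "y < L" then show "cr b y \<noteq> 0" using bnz by simp
    qed (rule that)
    also have "\<dots> = g 0 * tr (cr a) (cr b) (cr V) z 1 0 y + g 1 * tr (cr a) (cr b) (cr V) z 0 1 y"
      by (rule tr_lin)
    also have "\<dots> = g 0 * (tr (cr a) (cr b) (cr V) z 1 0 y + (of_real V0 - z) * tr (cr a) (cr b) (cr V) z 0 1 y)"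
      unfolding g1 by (simp add: algebra_simps)
    also have "\<dots> = g 0 * ?f y" using tr_lin[of "cr a" "cr b" "cr V" z 1 "of_real V0 - z" y] by simp
    finally show ?thesis .
  qed
  have "g 0 \<noteq> 0"
  proof
    assume "g 0 = 0"
    have "g x = 0" if "x \<le> L" for x using gi[OF that] \<open>g 0 = 0\<close> by simp
    then have "\<forall>x\<le>L. g x = 0" by blast
    then show False using g0 by blast
  qed
  have "VL * g L - g (L - 1) = z * g L" using rows[of L] L by simp
  moreover have "g L = g 0 * ?f L" "g (L - 1) = g 0 * ?f (L - 1)" using gi[of L] gi[of "L - 1"] by simp_all
  ultimately have "g 0 * ((of_real VL - z) * ?f L - ?f (L - 1)) = 0"
    by (simp add: algebra_simps)
  then show ?E using \<open>g 0 \<noteq> 0\<close> by simp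
next
  let ?f = "tr (cr a) (cr b) (cr V) z 1 (of_real V0 - z)"
  assume E: ?E
  have "(\<Sum>j\<le>L. complex_of_real (tridiag L V0 VL V a b i j) * ?f j) = z * ?f i" if iL: "i \<le> L" for i
  proof -
    consider "i = 0" | "i = L" "i \<noteq> 0" | "0 < i" "i < L" using iL by linarith
    then show ?thesis
    proof cases
      case 1 then show ?thesis using row_sum[OF L iL, of V0 VL V a b ?f] by simp
    next
      case 2 then show ?thesis using row_sum[OF L iL, of V0 VL V a b ?f] E by (simp add: algebra_simps)
    next
      case 3
      have bi: "cr b i \<noteq> 0" using 3 bnz by simp
      have "cr b i * ?f (i+1) = (cr V i - z) * ?f i - cr a i * ?f (i - 1)"
        using tr_step[of i "cr b"] 3 bnz by simp
      then have r: "?f (i+1) = ((cr V i - z) * ?f i - cr a i * ?f (i - 1)) / cr b i"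
        using bi by (simp add: eq_divide_eq mult.commute)
      have s: "(\<Sum>j\<le>L. complex_of_real (tridiag L V0 VL V a b i j) * ?f j) = cr V i * ?f i - cr a i * ?f (i - 1) - cr b i * ?f (i+1)"
        using row_sum[OF L iL, of V0 VL V a b ?f] 3 by simp
      show ?thesis unfolding s r using bi by (simp add: field_simps)
    qed
  qed
  moreover have "\<exists>x\<le>L. ?f x \<noteq> 0" by (rule exI[of _ 0]) simp
  ultimately show "z \<in> mat_spec L (tridiag L V0 VL V a b)" unfolding mat_spec_def by blast
qed


fun trp :: "(nat \<Rightarrow> real) \<Rightarrow> (nat \<Rightarrow> real) \<Rightarrow> (nat \<Rightarrow> real) \<Rightarrow> real poly \<Rightarrow> real poly \<Rightarrow> nat \<Rightarrow> real poly" where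
  "trp a b V u v 0 = u"
| "trp a b V u v (Suc 0) = v"
| "trp a b V u v (Suc (Suc y)) = smult (1 / b (Suc y)) ([:V (Suc y), -1:] * trp a b V u v (Suc y) - smult (a (Suc y)) (trp a b V u v y))"

abbreviation evc :: "real poly \<Rightarrow> complex \<Rightarrow> complex" where
  "evc p z \<equiv> poly (map_poly complex_of_real p) z"

lemma mpr_add: "map_poly complex_of_real (p + q) = map_poly complex_of_real p + map_poly complex_of_real q"
  by (intro poly_eqI) (simp add: coeff_map_poly)

lemma mpr_diff: "map_poly complex_of_real (p - q) = map_poly complex_of_real p - map_poly complex_of_real q"
  by (intro poly_eqI) (simp add: coeff_map_poly)

lemma mpr_smult: "map_poly complex_of_real (smult c p) = smult (of_real c) (map_poly complex_of_real p)"
  by (intro poly_eqI) (simp add: coeff_map_poly)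

lemma mpr_mult: "map_poly complex_of_real (p * q) = map_poly complex_of_real p * map_poly complex_of_real q"
proof (induction p)
  case 0 then show ?case by simp
next
  case (pCons a p)
  then show ?case by (simp add: mpr_add mpr_smult map_poly_pCons)
qed

lemma evc_add: "evc (p + q) z = evc p z + evc q z" by (simp add: mpr_add)
lemma evc_diff: "evc (p - q) z = evc p z - evc q z" by (simp add: mpr_diff)
lemma evc_mult: "evc (p * q) z = evc p z * evc q z" by (simp add: mpr_mult)
lemma evc_smult: "evc (smult c p) z = of_real c * evc p z" by (simp add: mpr_smult)
lemma evc_lin: "evc [:c, d:] z = of_real c + of_real d * z" by (simp add: map_poly_pCons)
lemma evc_1: "evc 1 z = 1" by simp
lemma evc_0: "evc 0 z = 0" by simp

lemma trp_eval: "evc (trp a b V u v y) z = tr (cr a) (cr b) (cr V) z (evc u z) (evc v z) y"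
proof (induction a b V u v y rule: trp.induct)
  case (3 a b V u v y)
  have "evc (trp a b V u v (Suc (Suc y))) z = of_real (1 / b (Suc y)) * ((of_real (V (Suc y)) + of_real (-1) * z) * evc (trp a b V u v (Suc y)) z - of_real (a (Suc y)) * evc (trp a b V u v y) z)"
    by (simp only: trp.simps evc_smult evc_diff evc_mult evc_lin)
  then show ?case using 3 by (simp add: divide_inverse algebra_simps)
qed simp_all

lemma trp_Q_deg:
  assumes bnz: "\<And>y. 0 < y \<Longrightarrow> b y \<noteq> 0"
  shows "1 \<le> y \<Longrightarrow> degree (trp a b V 0 1 y) = y - 1 \<and> trp a b V 0 1 y \<noteq> 0"
proof (induction y rule: nat_less_induct)
  case (1 y)
  show ?case
  proof (cases y)
    case 0 then show ?thesis using 1 by simp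
  next
    case (Suc x)
    show ?thesis
    proof (cases x)
      case 0 then show ?thesis using Suc by simp
    next
      case (Suc w)
      let ?Q = "trp a b V 0 1"
      have IH1: "degree (?Q (Suc w)) = w \<and> ?Q (Suc w) \<noteq> 0" using 1 \<open>y = Suc x\<close> Suc by force
      have d1: "degree ([:V (Suc w), -1:] * ?Q (Suc w)) = Suc w"
        using IH1 by (subst degree_mult_eq) auto
      have d2: "degree (smult (a (Suc w)) (?Q w)) < Suc w"
      proof (cases w)
        case 0 then show ?thesis by simp
      next
        case (Suc u)
        have "degree (?Q w) = u" using 1 \<open>y = Suc x\<close> \<open>x = Suc w\<close> Suc by force
        then show ?thesis using degree_smult_le[of "a (Suc w)" "?Q w"] Suc by simp
      qed
      have d3: "degree ([:V (Suc w), -1:] * ?Q (Suc w) - smult (a (Suc w)) (?Q w)) = Suc w"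
        using d1 d2 degree_add_eq_left[of "- smult (a (Suc w)) (?Q w)" "[:V (Suc w), -1:] * ?Q (Suc w)"]
        by simp
      have "degree (?Q y) = Suc w" using d3 bnz \<open>y = Suc x\<close> Suc by simp
      moreover have "?Q y \<noteq> 0" using calculation by auto
      ultimately show ?thesis using \<open>y = Suc x\<close> Suc by simp
    qed
  qed
qed

lemma trp_P_deg:
  shows "degree (trp a b V 1 0 y) \<le> y - 2"
proof (induction y rule: nat_less_induct)
  case (1 y)
  show ?case
  proof (cases y)
    case 0 then show ?thesis by simp
  next
    case (Suc x)
    show ?thesis
    proof (cases x)
      case 0 then show ?thesis using Suc by simp
    next
      case (Suc w)
      let ?P = "trp a b V 1 0"
      have e1: "degree ([:V (Suc w), -1:] * ?P (Suc w)) \<le> w"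
      proof (cases w)
        case 0 then show ?thesis by simp
      next
        case (Suc u)
        have "degree (?P (Suc w)) \<le> u" using 1 \<open>y = Suc x\<close> \<open>x = Suc w\<close> Suc by force
        then show ?thesis using degree_mult_le[of "[:V (Suc w), -1:]" "?P (Suc w)"] Suc by simp
      qed
      have e2: "degree (smult (a (Suc w)) (?P w)) \<le> w"
      proof -
        have "degree (?P w) \<le> w - 2" using 1 \<open>y = Suc x\<close> \<open>x = Suc w\<close> by simp
        then show ?thesis using degree_smult_le[of "a (Suc w)" "?P w"] by linarith
      qed
      have e3: "degree ([:V (Suc w), -1:] * ?P (Suc w) - smult (a (Suc w)) (?P w)) \<le> w"
        by (rule degree_diff_le[OF e1 e2])
      have "?P y = smult (1 / b (Suc w)) ([:V (Suc w), -1:] * ?P (Suc w) - smult (a (Suc w)) (?P w))"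
        using \<open>y = Suc x\<close> Suc by simp
      then have "degree (?P y) \<le> w"
        using e3 degree_smult_le[of "1 / b (Suc w)" "[:V (Suc w), -1:] * ?P (Suc w) - smult (a (Suc w)) (?P w)"]
        by simp
      then show ?thesis using \<open>y = Suc x\<close> Suc by simp
    qed
  qed
qed


lemma cell_WS:
  fixes a b V :: "nat \<Rightarrow> complex"
  assumes N: "2 \<le> N" and bnz: "\<And>y. 1 \<le> y \<Longrightarrow> y < N \<Longrightarrow> b y \<noteq> 0"
    and sym_ab: "\<And>y. 1 \<le> y \<Longrightarrow> y < N \<Longrightarrow> a (N - y) = b y"
    and sym_V: "\<And>y. 1 \<le> y \<Longrightarrow> y < N \<Longrightarrow> V (N - y) = V y"
  shows "tr a b V z 1 0 (N - 1) * tr a b V z 0 1 N - tr a b V z 1 0 N * tr a b V z 0 1 (N - 1) = 1"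
    and "tr a b V z 0 1 (N - 1) = - tr a b V z 1 0 N"
proof -
  let ?P = "tr a b V z 1 0" and ?Q = "tr a b V z 0 1"
  define W where "W y = ?P y * ?Q (y + 1) - ?P (y + 1) * ?Q y" for y
  have Wstep: "b y * W y = a y * W (y - 1)" if "1 \<le> y" "y < N" for y
  proof -
    have hP: "b y * ?P (y+1) = (V y - z) * ?P y - a y * ?P (y - 1)" using tr_step[of y b] that bnz by simp
    have hQ: "b y * ?Q (y+1) = (V y - z) * ?Q y - a y * ?Q (y - 1)" using tr_step[of y b] that bnz by simp
    have "b y * W y = ?P y * (b y * ?Q (y + 1)) - (b y * ?P (y + 1)) * ?Q y"
      unfolding W_def by (simp add: algebra_simps)
    also have "\<dots> = a y * (?P (y - 1) * ?Q y - ?P y * ?Q (y - 1))"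
      unfolding hP hQ by (simp add: algebra_simps)
    also have "?P (y - 1) * ?Q y - ?P y * ?Q (y - 1) = W (y - 1)"
      unfolding W_def using that by simp
    finally show ?thesis .
  qed
  have Wprod: "y < N \<Longrightarrow> W y = (\<Prod>i\<in>{1..y}. a i / b i)" for y
  proof (induction y)
    case 0 then show ?case by (simp add: W_def)
  next
    case (Suc y)
    have "b (Suc y) * W (Suc y) = a (Suc y) * W y" using Wstep[of "Suc y"] Suc by simp
    then have "W (Suc y) = a (Suc y) / b (Suc y) * W y" using bnz[of "Suc y"] Suc
      by (simp add: field_simps)
    then show ?case using Suc by (simp add: prod.cl_ivl_Suc mult.commute)
  qed
  have key: "b (N - i) = a i" if "i \<in> {1..N-1}" for i
    using sym_ab[of "N - i"] that by auto
  have prodeq: "(\<Prod>i\<in>{1..N-1}. a i) = (\<Prod>i\<in>{1..N-1}. b i)"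
    by (rule prod.reindex_bij_witness[of _ "\<lambda>i. N - i" "\<lambda>i. N - i"]) (use key in auto)
  have bprod: "(\<Prod>i\<in>{1..N-1}. b i) \<noteq> 0" using bnz by (auto simp: prod_zero_iff)
  have W1: "W (N - 1) = 1"
    using Wprod[of "N - 1"] N prodeq bprod by (simp add: prod_dividef)
  then show W1': "?P (N - 1) * ?Q N - ?P N * ?Q (N - 1) = 1" unfolding W_def using N by simp
  define F where "F y = ?P N * ?Q y - ?Q N * ?P y" for y
  have Frec: "b y * F (y+1) = (V y - z) * F y - a y * F (y - 1)" if "1 \<le> y" "y < N" for y
  proof -
    have hP: "b y * ?P (y+1) = (V y - z) * ?P y - a y * ?P (y - 1)" using tr_step[of y b] that bnz by simp
    have hQ: "b y * ?Q (y+1) = (V y - z) * ?Q y - a y * ?Q (y - 1)" using tr_step[of y b] that bnz by simp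
    have "b y * F (y+1) = ?P N * (b y * ?Q (y+1)) - ?Q N * (b y * ?P (y+1))"
      unfolding F_def by (simp add: algebra_simps)
    also have "\<dots> = (V y - z) * F y - a y * F (y - 1)"
      unfolding hP hQ F_def by (simp add: algebra_simps)
    finally show ?thesis .
  qed
  define h where "h y = F (N - y)" for y
  have hrec: "b y * h (y+1) = (V y - z) * h y - a y * h (y - 1)" if "1 \<le> y" "y < N" for y
  proof -
    have y': "1 \<le> N - y" "N - y < N" using that by auto
    have "b (N - y) * F (N - y + 1) = (V (N - y) - z) * F (N - y) - a (N - y) * F (N - y - 1)"
      using Frec[OF y'] .
    moreover have "b (N - y) = a y" using sym_ab[OF y'] that by simp
    moreover have "a (N - y) = b y" using sym_ab[OF that] .
    moreover have "V (N - y) = V y" using sym_V[OF that] .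
    moreover have "N - y + 1 = N - (y - 1)" "N - y - 1 = N - (y + 1)" using that by auto
    ultimately have "a y * h (y - 1) = (V y - z) * h y - b y * h (y + 1)"
      unfolding h_def by simp
    then show ?thesis by (simp add: algebra_simps)
  qed
  have hb: "b y \<noteq> 0" if "1 \<le> y" "y < N" for y using bnz that .
  have hy: "h y = tr a b V z (h 0) (h 1) y" if "y \<le> N" for y
    by (rule tr_unique[of N b h V z a, OF hrec hb that])
  have h0: "h 0 = 0" unfolding h_def F_def by simp
  have h1: "h 1 = -1" unfolding h_def F_def using W1' by (simp add: algebra_simps)
  have "h (N - 1) = tr a b V z 0 (-1) (N - 1)" using hy[of "N - 1"] h0 h1 by simp
  also have "\<dots> = - ?Q (N - 1)" using tr_lin[of a b V z 0 "-1" "N - 1"] by simp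
  finally have e1: "h (N - 1) = - ?Q (N - 1)" .
  have "h (N - 1) = ?P N" unfolding h_def F_def using N by simp
  then show "?Q (N - 1) = - ?P N" using e1 by simp
qed


lemma m3_eq:
  assumes "3 ^ m dvd x" "\<not> 3 ^ Suc m dvd x"
  shows "m3 x = m"
  unfolding m3_def
proof (rule Greatest_equality)
  show "3 ^ m dvd x" by fact
next
  fix y assume "(3::nat) ^ y dvd x"
  show "y \<le> m"
  proof (rule ccontr)
    assume "\<not> y \<le> m"
    then have "(3::nat) ^ Suc m dvd 3 ^ y" by (intro le_imp_power_dvd) simp
    then show False using \<open>3 ^ y dvd x\<close> assms(2) dvd_trans by blast
  qed
qed

lemma m3_props:
  assumes "x > 0"
  shows "3 ^ m3 x dvd x \<and> \<not> 3 ^ Suc (m3 x) dvd x"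
proof -
  have bnd: "y \<le> x" if "(3::nat) ^ y dvd x" for y
  proof -
    have "y < 3 ^ y" by (induction y) auto
    also have "(3::nat) ^ y \<le> x" using that assms by (simp add: dvd_imp_le)
    finally show ?thesis by simp
  qed
  have d: "3 ^ m3 x dvd x" unfolding m3_def
    by (rule GreatestI_nat[of _ 0 x]) (auto intro: bnd)
  have nd: "\<not> 3 ^ Suc (m3 x) dvd x"
  proof
    assume "3 ^ Suc (m3 x) dvd x"
    then have "Suc (m3 x) \<le> m3 x" unfolding m3_def
      by (rule Greatest_le_nat[of _ _ x]) (auto intro: bnd)
    then show False by simp
  qed
  show ?thesis using d nd by blast
qed

definition rr :: "nat \<Rightarrow> nat" where
  "rr x = (x div 3 ^ m3 x) mod 3"

lemma m3_rr_mult: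
  assumes "X mod 3 \<noteq> 0"
  shows "m3 (3 ^ m * X) = m \<and> rr (3 ^ m * X) = X mod 3"
proof -
  have nd: "\<not> (3::nat) ^ Suc m dvd 3 ^ m * X"
  proof
    assume "(3::nat) ^ Suc m dvd 3 ^ m * X"
    then have "3 ^ m * 3 dvd 3 ^ m * (X::nat)" by (simp add: mult.commute)
    then have "3 dvd X" using nat_mult_dvd_cancel1[of "3 ^ m" 3 X] by simp
    then show False using assms by (simp add: dvd_eq_mod_eq_0)
  qed
  have m: "m3 (3 ^ m * X) = m" by (rule m3_eq[OF _ nd]) simp
  show ?thesis unfolding rr_def m by simp
qed

lemma decomp:
  assumes "x > 0"
  shows "x = 3 ^ m3 x * (x div 3 ^ m3 x) \<and> (x div 3 ^ m3 x) mod 3 \<noteq> 0"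
proof -
  have d: "3 ^ m3 x dvd x" and nd: "\<not> 3 ^ Suc (m3 x) dvd x" using m3_props[OF assms] by auto
  have e: "x = 3 ^ m3 x * (x div 3 ^ m3 x)" using d by simp
  have "(x div 3 ^ m3 x) mod 3 \<noteq> 0"
  proof
    assume "(x div 3 ^ m3 x) mod 3 = 0"
    then obtain r where "x div 3 ^ m3 x = 3 * r" by auto
    then have "x = 3 ^ Suc (m3 x) * r" using e by simp
    then show False using nd by (metis dvd_triv_left)
  qed
  then show ?thesis using e by blast
qed

lemma rr_12:
  assumes "x > 0" shows "rr x = 1 \<or> rr x = 2"
proof -
  have "rr x \<noteq> 0" using decomp[OF assms] unfolding rr_def by blast
  moreover have "rr x < 3" unfolding rr_def by simp
  ultimately show ?thesis by linarith
qed

lemma m3_less: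
  assumes "0 < y" "y < 3 ^ n"
  shows "m3 y < n"
proof -
  have "(3::nat) ^ m3 y \<le> y" using m3_props[OF assms(1)] assms(1) by (simp add: dvd_imp_le)
  then have "(3::nat) ^ m3 y < 3 ^ n" using assms(2) by linarith
  then show ?thesis by (rule power_less_imp_less_exp[rotated]) simp
qed

lemma obtain_mq:
  assumes "0 < y" "y < 3 ^ n"
  obtains m q where "y = 3 ^ m * q" "q mod 3 \<noteq> 0" "m < n" "rr y = q mod 3"
proof -
  have dy: "y = 3 ^ m3 y * (y div 3 ^ m3 y)" "(y div 3 ^ m3 y) mod 3 \<noteq> 0" using decomp[OF assms(1)] by auto
  have "rr y = (y div 3 ^ m3 y) mod 3" unfolding rr_def by simp
  then show ?thesis using that dy m3_less[OF assms] by blast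
qed

lemma rr_shift:
  assumes "0 < y" "y < 3 ^ n"
  shows "rr (3 ^ n * j + y) = rr y"
proof -
  obtain m q where mq: "y = 3 ^ m * q" "q mod 3 \<noteq> 0" "m < n" "rr y = q mod 3"
    using obtain_mq[OF assms] by blast
  obtain e where e: "n = Suc (m + e)" using less_imp_Suc_add[OF mq(3)] by blast
  have p: "(3::nat) ^ n = 3 ^ m * (3 * 3 ^ e)" unfolding e by (simp add: power_add algebra_simps)
  have x: "3 ^ n * j + y = 3 ^ m * (3 * (3 ^ e * j) + q)"
    unfolding p mq(1) by (simp add: algebra_simps)
  have md: "(3 * (3 ^ e * j) + q) mod 3 = q mod 3" by simp
  have "rr (3 ^ n * j + y) = rr (3 ^ m * (3 * (3 ^ e * j) + q))" by (simp only: x)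
  also have "\<dots> = (3 * (3 ^ e * j) + q) mod 3"
    using m3_rr_mult[of "3 * (3 ^ e * j) + q" m] md mq(2) by simp
  also have "\<dots> = rr y" using md mq(4) by simp
  finally show ?thesis .
qed

lemma rr_coarse:
  assumes "0 < j"
  shows "rr (3 ^ n * j) = rr j"
proof -
  have dj: "j = 3 ^ m3 j * (j div 3 ^ m3 j)" "(j div 3 ^ m3 j) mod 3 \<noteq> 0" using decomp[OF assms] by auto
  have "3 ^ n * j = 3 ^ (n + m3 j) * (j div 3 ^ m3 j)" using dj(1)
    by (metis mult.assoc power_add)
  then show ?thesis using m3_rr_mult[OF dj(2), of "n + m3 j"] unfolding rr_def[of j] by simp
qed

lemma mod3_sub:
  fixes q T :: nat
  assumes "q < 3 * T" "q mod 3 \<noteq> 0"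
  shows "(3 * T - q) mod 3 = 3 - q mod 3"
proof -
  define r where "r = q div 3"
  define s where "s = q mod 3"
  have q: "q = 3 * r + s" unfolding r_def s_def by simp
  have s3: "s < 3" "s \<noteq> 0" unfolding s_def using assms(2) by auto
  have rT: "r < T" using assms(1) q by linarith
  have "3 * T - q = 3 * (T - r - 1) + (3 - s)" using q s3 rT by arith
  then have "(3 * T - q) mod 3 = (3 - s) mod 3" by simp
  also have "\<dots> = 3 - s" using s3 by simp
  finally show ?thesis unfolding s_def .
qed

lemma rr_refl:
  assumes "0 < y" "y < 3 ^ n"
  shows "rr (3 ^ n - y) = 1 \<longleftrightarrow> rr y = 2"
proof -
  obtain m q where mq: "y = 3 ^ m * q" "q mod 3 \<noteq> 0" "m < n" "rr y = q mod 3"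
    using obtain_mq[OF assms] by blast
  obtain e where e: "n = Suc (m + e)" using less_imp_Suc_add[OF mq(3)] by blast
  have p: "(3::nat) ^ n = 3 ^ m * (3 * 3 ^ e)" unfolding e by (simp add: power_add algebra_simps)
  have lt: "q < 3 * 3 ^ e"
  proof -
    have "3 ^ m * q < 3 ^ m * (3 * 3 ^ e)" using mq(1) assms(2) p by simp
    then show ?thesis by simp
  qed
  have x: "3 ^ n - y = 3 ^ m * (3 * 3 ^ e - q)"
    unfolding p mq(1) by (rule diff_mult_distrib2[symmetric])
  have md: "(3 * 3 ^ e - q) mod 3 = 3 - q mod 3" using mod3_sub[OF lt mq(2)] .
  have q3: "q mod 3 < 3" by simp
  have "(3 * 3 ^ e - q) mod 3 \<noteq> 0" using md q3 by simp
  then have "rr (3 ^ n - y) = (3 * 3 ^ e - q) mod 3" using m3_rr_mult[of "3 * 3 ^ e - q" m] x by simp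
  then show ?thesis using md mq(2,4) q3 by auto
qed

lemma trans_p_left: "0 < x \<Longrightarrow> trans_p p x (x - 1) = (if rr x = 1 then 1 - p else p)"
  using rr_12[of x] unfolding trans_p_def Let_def rr_def by auto

lemma trans_p_right: "0 < x \<Longrightarrow> trans_p p x (x + 1) = (if rr x = 1 then p else 1 - p)"
  using rr_12[of x] unfolding trans_p_def Let_def rr_def by auto


locale decim =
  fixes s t u :: "nat \<Rightarrow> complex" and A B :: "nat \<Rightarrow> real" and al de et c :: complex
  assumes s0: "s 0 = 1" and t0: "t 0 = c"
    and cs: "\<And>j. s (Suc j) = de * s j + et * t j"
    and cu: "\<And>j. u (Suc j) = al * s j - de * t j"
    and vert: "\<And>j. 1 \<le> j \<Longrightarrow> of_real (B j) * t j = c * s j - of_real (A j) * u j"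
    and AB: "\<And>j. 1 \<le> j \<Longrightarrow> A j + B j = 1"
    and Apos: "\<And>j. 1 \<le> j \<Longrightarrow> A j > 0" and Bpos: "\<And>j. 1 \<le> j \<Longrightarrow> B j > 0"
    and Wr: "al * et + de ^ 2 = 1"
begin

definition "E j = c * s j - u j"
definition "G = et * c ^ 2 + 2 * de * c - al"
definition "rho = c * et + de"

lemma s1: "s 1 = rho"
  using cs[of 0] s0 t0 unfolding rho_def by (simp add: algebra_simps)

lemma E1: "E 1 = G"
  using cs[of 0] cu[of 0] s0 t0 unfolding E_def G_def by (simp add: algebra_simps power2_eq_square)

lemma etaG: "et * G = rho ^ 2 - 1"
proof -
  have "et * G - (rho ^ 2 - 1) = 1 - (al * et + de ^ 2)"
    unfolding G_def rho_def by (simp add: algebra_simps power2_eq_square)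
  then show ?thesis using Wr by simp
qed

lemma t_eq:
  assumes "1 \<le> j"
  shows "t j = c * s j + (of_real (A j) / of_real (B j)) * E j"
proof -
  have B0: "complex_of_real (B j) \<noteq> 0" using Bpos[OF assms] by simp
  have A: "complex_of_real (A j) = 1 - of_real (B j)" using AB[OF assms]
    by (metis add_diff_cancel_right' of_real_1 of_real_diff)
  have "of_real (B j) * t j = of_real (B j) * (c * s j) + of_real (A j) * E j"
    unfolding vert[OF assms] E_def A by (simp add: algebra_simps)
  then show ?thesis using B0 by (simp add: field_simps)
qed

lemma R1:
  assumes "1 \<le> j"
  shows "E (Suc j) = G * s j + rho * (of_real (A j) / of_real (B j)) * E j"
proof -
  have "E (Suc j) = (c * de - al) * s j + rho * t j"
    unfolding E_def cs cu rho_def by (simp add: algebra_simps)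
  also have "\<dots> = G * s j + rho * (of_real (A j) / of_real (B j)) * E j"
    unfolding t_eq[OF assms] G_def rho_def by (simp add: algebra_simps power2_eq_square)
  finally show ?thesis .
qed

lemma R2:
  assumes "1 \<le> j"
  shows "et * E j = rho * s j - s (j - 1)"
proof -
  obtain i where j: "j = Suc i" using assms by (cases j) auto
  have "et * E j - (rho * s j - s (j - 1)) = s i * (1 - (al * et + de ^ 2))"
    unfolding j E_def cs cu rho_def by (simp add: algebra_simps power2_eq_square)
  then show ?thesis using Wr by simp
qed

lemma R3:
  assumes "1 \<le> j"
  shows "of_real (B j) * s (Suc j) = rho * s j - of_real (A j) * s (j - 1)"
proof -
  have A: "complex_of_real (A j) = 1 - of_real (B j)" using AB[OF assms]
    by (metis add_diff_cancel_right' of_real_1 of_real_diff)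
  have eu: "et * u j = et * c * s j - (rho * s j - s (j - 1))"
    using R2[OF assms] unfolding E_def by (simp add: algebra_simps)
  have "of_real (B j) * s (Suc j) = of_real (B j) * de * s j + et * (of_real (B j) * t j)"
    unfolding cs by (simp add: algebra_simps)
  also have "\<dots> = of_real (B j) * de * s j + et * c * s j - of_real (A j) * (et * u j)"
    unfolding vert[OF assms] by (simp add: algebra_simps)
  also have "\<dots> = rho * s j - of_real (A j) * s (j - 1)"
    unfolding eu A rho_def by (simp add: algebra_simps)
  finally show ?thesis .
qed

lemma G0:
  assumes "G = 0"
  shows "1 \<le> j \<Longrightarrow> E j = 0"
proof (induction j rule: nat_induct_at_least)
  case base then show ?case using E1 assms by simp
next
  case (Suc j) then show ?case using R1[of j] assms by simp
qed

lemma eta0: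
  assumes "et = 0"
  shows "1 \<le> j \<Longrightarrow> \<exists>w::real. w \<ge> 1 \<and> E j = G * de ^ (j - 1) * of_real w"
proof (induction j rule: nat_induct_at_least)
  case base then show ?case using E1 by (intro exI[of _ 1]) simp
next
  case (Suc j)
  then obtain w where w: "w \<ge> 1" "E j = G * de ^ (j - 1) * of_real w" by blast
  have rd: "rho = de" unfolding rho_def using assms by simp
  have sj: "s i = de ^ i" for i
    by (induction i) (simp_all add: s0 cs assms)
  have pos: "A j / B j > 0" using Apos[OF Suc(1)] Bpos[OF Suc(1)] by simp
  have dd: "de * de ^ (j - 1) = de ^ j" using Suc(1) by (cases j) auto
  have "E (Suc j) = G * de ^ j + de * (of_real (A j) / of_real (B j)) * (G * de ^ (j - 1) * of_real w)"
    using R1[OF Suc(1)] w(2) rd sj by simp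
  also have "\<dots> = G * de ^ (Suc j - 1) * of_real (1 + A j / B j * w)"
    using dd by (simp add: algebra_simps)
  finally have "E (Suc j) = G * de ^ (Suc j - 1) * of_real (1 + A j / B j * w)" .
  moreover have "1 + A j / B j * w \<ge> 1"
  proof -
    have "A j / B j * w \<ge> 0" using pos w(1) by (intro mult_nonneg_nonneg) auto
    then show ?thesis by linarith
  qed
  ultimately show ?case by blast
qed

lemma main:
  assumes K: "1 \<le> K"
  shows "E K = 0 \<longleftrightarrow> ((rho * s K - s (K - 1) = 0 \<and> rho ^ 2 \<noteq> 1) \<or> G = 0)"
proof
  assume EK: "E K = 0"
  show "(rho * s K - s (K - 1) = 0 \<and> rho ^ 2 \<noteq> 1) \<or> G = 0"
  proof (cases "et = 0")
    case True
    obtain w :: real where w: "w \<ge> 1" "E K = G * de ^ (K - 1) * of_real w" using eta0[OF True K] by blast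
    have "de ^ 2 = 1" using Wr True by simp
    then have "de \<noteq> 0" by auto
    then have "G = 0" using EK w by simp
    then show ?thesis by simp
  next
    case False
    have L: "rho * s K - s (K - 1) = 0" using R2[OF K] EK by simp
    show ?thesis
    proof (cases "rho ^ 2 = 1")
      case True
      then have "et * G = 0" using etaG by simp
      then show ?thesis using False by simp
    qed (use L in simp)
  qed
next
  assume "(rho * s K - s (K - 1) = 0 \<and> rho ^ 2 \<noteq> 1) \<or> G = 0"
  then show "E K = 0"
  proof
    assume h: "rho * s K - s (K - 1) = 0 \<and> rho ^ 2 \<noteq> 1"
    then have "et * G \<noteq> 0" using etaG by simp
    then have "et \<noteq> 0" by auto
    moreover have "et * E K = 0" using R2[OF K] h by simp
    ultimately show ?thesis by simp
  next
    assume "G = 0" then show ?thesis using G0 K by simp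
  qed
qed

end


definition aF :: "real \<Rightarrow> nat \<Rightarrow> real" where "aF p x = trans_p p x (x - 1)"
definition bF :: "real \<Rightarrow> nat \<Rightarrow> real" where "bF p x = trans_p p x (x + 1)"
definition VF :: "real \<Rightarrow> nat \<Rightarrow> nat \<Rightarrow> nat \<Rightarrow> real" where
  "VF \<beta> k n x = \<beta> * cos (2 * pi * (real k / 3 ^ n) * real x)"

lemma cos_shift_nat: "cos (x + 2 * pi * real m) = cos x"
proof (induction m)
  case (Suc m)
  have "x + 2 * pi * real (Suc m) = (x + 2 * pi * real m) + 2 * pi" by (simp add: algebra_simps)
  then show ?case by (simp only: cos_periodic Suc.IH)
qed simp

lemma VF_shift: "VF \<beta> k n (3 ^ n * j + y) = VF \<beta> k n y"
proof -
  have "2 * pi * (real k / 3 ^ n) * real (3 ^ n * j + y) = 2 * pi * (real k / 3 ^ n) * real y + 2 * pi * real (k * j)"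
    by (simp add: field_simps)
  then show ?thesis unfolding VF_def by (simp only: cos_shift_nat)
qed

lemma VF_coarse: "VF \<beta> k n (3 ^ n * j) = \<beta>"
  using VF_shift[of \<beta> k n j 0] by (simp add: VF_def)

lemma VF_refl:
  assumes "y \<le> 3 ^ n"
  shows "VF \<beta> k n (3 ^ n - y) = VF \<beta> k n y"
proof -
  have "2 * pi * (real k / 3 ^ n) * real (3 ^ n - y) = - (2 * pi * (real k / 3 ^ n) * real y) + 2 * pi * real k"
    using assms by (simp add: field_simps of_nat_diff)
  then show ?thesis unfolding VF_def by (simp only: cos_shift_nat cos_minus)
qed

lemma aF_eq: "0 < x \<Longrightarrow> aF p x = (if rr x = 1 then 1 - p else p)"
  unfolding aF_def by (rule trans_p_left)
lemma bF_eq: "0 < x \<Longrightarrow> bF p x = (if rr x = 1 then p else 1 - p)"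
  unfolding bF_def by (rule trans_p_right)

lemma abF_pos:
  assumes "0 < p" "p < 1" "0 < x"
  shows "aF p x > 0" "bF p x > 0" "aF p x + bF p x = 1"
  using assms by (auto simp: aF_eq bF_eq)

lemma abF_shift:
  assumes "0 < y" "y < 3 ^ n"
  shows "aF p (3 ^ n * j + y) = aF p y" "bF p (3 ^ n * j + y) = bF p y"
  using assms rr_shift[OF assms, of j] by (auto simp: aF_eq bF_eq)

lemma abF_coarse:
  assumes "0 < j"
  shows "aF p (3 ^ n * j) = aF p j" "bF p (3 ^ n * j) = bF p j"
  using assms rr_coarse[OF assms, of n] by (auto simp: aF_eq bF_eq)

lemma abF_refl:
  assumes "0 < y" "y < 3 ^ n"
  shows "aF p (3 ^ n - y) = bF p y"
proof -
  have "0 < 3 ^ n - y" using assms by simp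
  then show ?thesis using rr_refl[OF assms] rr_12[OF assms(1)] assms
    by (auto simp: aF_eq bF_eq)
qed

lemma H_tridiag:
  assumes "n \<le> l"
  shows "H_mat p \<beta> (real k / 3 ^ n) 0 l = tridiag (3 ^ l) \<beta> \<beta> (VF \<beta> k n) (aF p) (bF p)"
proof (intro ext)
  fix i j
  have e: "cos (2 * pi * (real k / 3 ^ n) * 3 ^ l + 0) = 1"
  proof -
    have "VF 1 k n (3 ^ n * 3 ^ (l - n)) = 1" by (rule VF_coarse)
    moreover have "(3::nat) ^ n * 3 ^ (l - n) = 3 ^ l" using assms by (simp flip: power_add)
    ultimately show ?thesis unfolding VF_def by simp
  qed
  show "H_mat p \<beta> (real k / 3 ^ n) 0 l i j = tridiag (3 ^ l) \<beta> \<beta> (VF \<beta> k n) (aF p) (bF p) i j"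
    unfolding H_mat_def tridiag_def e VF_def aF_def bF_def
    by (auto simp: algebra_simps)
qed

lemma Lap_tridiag: "Lap_mat p m = tridiag (3 ^ m) 1 1 (\<lambda>_. 1) (aF p) (bF p)"
  unfolding Lap_mat_def tridiag_def aF_def bF_def by (intro ext) auto


lemma spec_char:
  fixes p \<beta> :: real and n k l :: nat and z :: complex
  assumes p: "0 < p" "p < 1" and n: "1 \<le> n" and l: "n \<le> l"
  defines "a \<equiv> cr (aF p)" and "b \<equiv> cr (bF p)" and "V \<equiv> cr (VF \<beta> k n)"
  defines "N \<equiv> (3::nat) ^ n"
  defines "c \<equiv> complex_of_real \<beta> - z"
  defines "rho \<equiv> c * tr a b V z 0 1 N + tr a b V z 1 0 N"
  defines "G \<equiv> tr a b V z 0 1 N * c ^ 2 + 2 * tr a b V z 1 0 N * c - tr a b V z 1 0 (N - 1)"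
  shows "z \<in> sigma_H p \<beta> (real k / 3 ^ n) 0 l \<longleftrightarrow>
           ((1 - rho \<in> sigma_Lap p (l - n) \<and> rho ^ 2 \<noteq> 1) \<or> G = 0)"
proof -
  define K where "K = (3::nat) ^ (l - n)"
  define f where "f = tr a b V z 1 c"
  define P where "P = tr a b V z 1 0"
  define Q where "Q = tr a b V z 0 1"
  define s where "s j = f (N * j)" for j
  define t where "t j = f (N * j + 1)" for j
  define u where "u j = f (N * j - 1)" for j
  have N3: "3 \<le> N" unfolding N_def using power_increasing[of 1 n "3::nat"] n by simp
  have K1: "1 \<le> K" unfolding K_def by simp
  have LNK: "(3::nat) ^ l = N * K" unfolding N_def K_def using l by (simp flip: power_add)
  have bpos: "0 < x \<Longrightarrow> b x \<noteq> 0" for x unfolding b_def using abF_pos[OF p, of x] by simp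
  have shift: "f (N * j + y) = s j * P y + t j * Q y" if "y \<le> N" for j y
  proof -
    have rec: "b y * f (N * j + (y + 1)) = (V y - z) * f (N * j + y) - a y * f (N * j + (y - 1))"
      if "1 \<le> y" "y < N" for y
    proof -
      have x: "0 < y" "y < 3 ^ n" using that unfolding N_def by auto
      have "b (N * j + y) * f (N * j + y + 1) = (V (N * j + y) - z) * f (N * j + y) - a (N * j + y) * f (N * j + y - 1)"
        unfolding f_def using tr_step[of "N * j + y" b] bpos that by simp
      moreover have "b (N * j + y) = b y" "a (N * j + y) = a y" "V (N * j + y) = V y"
        unfolding a_def b_def V_def N_def using abF_shift[OF x] VF_shift by auto
      moreover have "N * j + y - 1 = N * j + (y - 1)" using that by simp
      ultimately show ?thesis by simp
    qed
    have "f (N * j + y) = tr a b V z (f (N * j + 0)) (f (N * j + 1)) y"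
      using tr_unique[of N b "\<lambda>y. f (N * j + y)" V z a, OF rec bpos that] by simp
    also have "\<dots> = s j * P y + t j * Q y" unfolding s_def t_def P_def Q_def by (simp add: tr_lin[of _ _ _ _ "f (N * j)"])
    finally show ?thesis .
  qed
  have WS: "P (N - 1) * Q N - P N * Q (N - 1) = 1" "Q (N - 1) = - P N"
  proof -
    have bn: "b y \<noteq> 0" if "1 \<le> y" "y < N" for y using bpos that by simp
    have sab: "a (N - y) = b y" if "1 \<le> y" "y < N" for y
      unfolding a_def b_def N_def using abF_refl[of y n p] that unfolding N_def by simp
    have sV: "V (N - y) = V y" if "1 \<le> y" "y < N" for y
      unfolding V_def using VF_refl[of y n \<beta> k] that unfolding N_def by simp
    show "P (N - 1) * Q N - P N * Q (N - 1) = 1" "Q (N - 1) = - P N"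
      unfolding P_def Q_def using cell_WS[of N b a V z, OF _ bn sab sV] N3 by auto
  qed
  interpret d: decim s t u "aF p" "bF p" "P (N - 1)" "P N" "Q N" c
  proof
    show "s 0 = 1" unfolding s_def f_def by simp
    show "t 0 = c" unfolding t_def f_def by simp
    fix j
    show "s (Suc j) = P N * s j + Q N * t j"
      using shift[of N j] unfolding s_def by (simp add: algebra_simps)
    show "u (Suc j) = P (N - 1) * s j - P N * t j"
    proof -
      have "N * Suc j - 1 = N * j + (N - 1)" using N3 by (simp add: algebra_simps)
      then show ?thesis using shift[of "N - 1" j] WS(2) unfolding u_def s_def by (simp add: algebra_simps)
    qed
  next
    fix j :: nat assume j: "1 \<le> j"
    have x: "0 < N * j" using j N3 by simp
    have "b (N * j) * f (N * j + 1) = (V (N * j) - z) * f (N * j) - a (N * j) * f (N * j - 1)"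
      unfolding f_def using tr_step[of "N * j" b] bpos x by simp
    moreover have "b (N * j) = of_real (bF p j)" "a (N * j) = of_real (aF p j)" "V (N * j) = of_real \<beta>"
      unfolding a_def b_def V_def N_def using abF_coarse[of j p n] VF_coarse j by auto
    ultimately show "of_real (bF p j) * t j = c * s j - of_real (aF p j) * u j"
      unfolding s_def t_def u_def c_def by simp
    show "aF p j + bF p j = 1" "aF p j > 0" "bF p j > 0" using abF_pos[OF p, of j] j by auto
  next
    show "P (N - 1) * Q N + P N ^ 2 = 1" using WS by (simp add: power2_eq_square algebra_simps)
  qed
  have rho_eq: "d.rho = rho" unfolding d.rho_def unfolding rho_def P_def Q_def by (simp add: algebra_simps)
  have G_eq: "d.G = G" unfolding d.G_def unfolding G_def P_def Q_def by (simp add: algebra_simps)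
  have H: "z \<in> sigma_H p \<beta> (real k / 3 ^ n) 0 l \<longleftrightarrow> d.E K = 0"
  proof -
    have bn: "bF p i \<noteq> 0" if "0 < i" "i < 3 ^ l" for i using abF_pos[OF p, of i] that by simp
    have "z \<in> sigma_H p \<beta> (real k / 3 ^ n) 0 l \<longleftrightarrow>
        (of_real \<beta> - z) * f (3 ^ l) - f (3 ^ l - 1) = 0"
      unfolding sigma_H_def H_tridiag[OF l] f_def a_def b_def V_def c_def
      by (rule chain_spec) (use bn in auto)
    moreover have "f (3 ^ l) = s K" "f (3 ^ l - 1) = u K" unfolding s_def u_def LNK by auto
    ultimately show ?thesis unfolding d.E_def by (simp add: c_def)
  qed
  have Lp: "1 - rho \<in> sigma_Lap p (l - n) \<longleftrightarrow> rho * s K - s (K - 1) = 0"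
  proof -
    have bn: "bF p i \<noteq> 0" if "0 < i" "i < 3 ^ (l - n)" for i using abF_pos[OF p, of i] that by simp
    let ?g = "tr a b (cr (\<lambda>_. 1)) (1 - rho) 1 (of_real 1 - (1 - rho))"
    have "1 - rho \<in> sigma_Lap p (l - n) \<longleftrightarrow> (of_real 1 - (1 - rho)) * ?g K - ?g (K - 1) = 0"
      unfolding sigma_Lap_def Lap_tridiag a_def b_def K_def
      by (rule chain_spec) (use bn in auto)
    moreover have "?g j = s j" if "j \<le> K" for j
    proof -
      have rec: "b j * s (j + 1) = (cr (\<lambda>_. 1) j - (1 - rho)) * s j - a j * s (j - 1)"
        if "1 \<le> j" "j < K" for j
        using d.R3[OF that(1)] rho_eq unfolding a_def b_def by simp
      have "s j = tr a b (cr (\<lambda>_. 1)) (1 - rho) (s 0) (s 1) j"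
        by (rule tr_unique[of K b s _ _ a, OF rec _ that]) (use bpos in auto)
      then show ?thesis using d.s0 d.s1 rho_eq by simp
    qed
    ultimately show ?thesis using K1 by simp
  qed
  show ?thesis using H Lp d.main[OF K1] rho_eq G_eq by simp
qed


lemma sigma_Lap0: "sigma_Lap p 0 = {0, 2}"
proof (intro set_eqI)
  fix w :: complex
  have "w \<in> sigma_Lap p 0 \<longleftrightarrow> (of_real 1 - w) * tr (cr (aF p)) (cr (bF p)) (cr (\<lambda>_. 1)) w 1 (of_real 1 - w) 1
        - tr (cr (aF p)) (cr (bF p)) (cr (\<lambda>_. 1)) w 1 (of_real 1 - w) (1 - 1) = 0"
    unfolding sigma_Lap_def Lap_tridiag power_0 by (rule chain_spec) auto
  also have "\<dots> \<longleftrightarrow> w * (w - 2) = 0" by (simp add: algebra_simps power2_eq_square)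
  also have "\<dots> \<longleftrightarrow> w \<in> {0, 2}" by auto
  finally show "w \<in> sigma_Lap p 0 \<longleftrightarrow> w \<in> {0, 2}" .
qed

lemma rr1: "rr 1 = 1" and rr2: "rr 2 = 2"
proof -
  have "m3 1 = 0" by (rule m3_eq) auto
  then show "rr 1 = 1" unfolding rr_def by simp
  have "m3 2 = 0" by (rule m3_eq) auto
  then show "rr 2 = 2" unfolding rr_def by simp
qed

lemma cos_vals: "cos (2 * pi / 3) = -1/2" "cos (4 * pi / 3) = -1/2" "cos (8 * pi / 3) = -1/2"
proof -
  show c1: "cos (2 * pi / 3) = -1/2" by (rule cos_120)
  have "4 * pi / 3 = 2 * pi - 2 * pi / 3" by simp
  then show "cos (4 * pi / 3) = -1/2" using c1 by (simp only: cos_2pi_minus)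
  have "8 * pi / 3 = 2 * pi / 3 + 2 * pi" by simp
  then show "cos (8 * pi / 3) = -1/2" using c1 by (simp only: cos_periodic)
qed

lemma VF_vals:
  assumes "k \<in> {1, 2}"
  shows "VF \<beta> k 1 1 = - \<beta> / 2 \<and> VF \<beta> k 1 2 = - \<beta> / 2"
proof -
  have k: "k = 1 \<or> k = 2" using assms by auto
  have a: "VF \<beta> 1 1 1 = \<beta> * cos (2 * pi / 3)" unfolding VF_def by (intro arg_cong[where f="\<lambda>x. \<beta> * cos x"]) simp
  have b: "VF \<beta> 1 1 2 = \<beta> * cos (4 * pi / 3)" unfolding VF_def by (intro arg_cong[where f="\<lambda>x. \<beta> * cos x"]) simp
  have c: "VF \<beta> 2 1 1 = \<beta> * cos (4 * pi / 3)" unfolding VF_def by (intro arg_cong[where f="\<lambda>x. \<beta> * cos x"]) simp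
  have d: "VF \<beta> 2 1 2 = \<beta> * cos (8 * pi / 3)" unfolding VF_def by (intro arg_cong[where f="\<lambda>x. \<beta> * cos x"]) simp
  show ?thesis using k a b c d cos_vals by auto
qed

lemma Pz_lem:
  assumes "p \<noteq> 0" "q \<noteq> 0" "aF p (Suc 0) = q" "bF p (Suc 0) = p" "aF p (Suc (Suc 0)) = p" "bF p (Suc (Suc 0)) = q"
   "VF \<beta> k n (Suc 0) = - \<beta> / 2" "VF \<beta> k n (Suc (Suc 0)) = - \<beta> / 2"
  shows "poly (trp (aF p) (bF p) (VF \<beta> k n) 1 0 (Suc (Suc (Suc 0)))) z * p = \<beta> / 2 + z"
  using assms by (simp add: field_simps)

lemma Qz_lem:
  assumes "p \<noteq> 0" "q \<noteq> 0" "aF p (Suc 0) = q" "bF p (Suc 0) = p" "aF p (Suc (Suc 0)) = p" "bF p (Suc (Suc 0)) = q"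
   "VF \<beta> k n (Suc 0) = - \<beta> / 2" "VF \<beta> k n (Suc (Suc 0)) = - \<beta> / 2"
  shows "poly (trp (aF p) (bF p) (VF \<beta> k n) 0 1 (Suc (Suc (Suc 0)))) z * (p * q) = (\<beta> / 2 + z) ^ 2 - p ^ 2"
  using assms(1,2) by (simp add: assms(3-8) field_simps power2_eq_square)

lemma fin:
  fixes PP QQ RR :: real
  assumes "PP * p = \<beta> / 2 + z" "QQ * (p * (1 - p)) = (\<beta> / 2 + z) ^ 2 - p ^ 2"
  shows "4 * p * (1 - p) - 4 * (1 - p) * (PP * p) - 4 * (\<beta> - z) * (QQ * (p * (1 - p))) = (- \<beta> + 2 * p - 2 * z) *
            (\<beta>^2 + 2 * \<beta> * p + \<beta> * z - 2 * p * z - 2 * p - 2 * z^2 + 2)"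
  unfolding assms by (simp add: algebra_simps power2_eq_square)

theorem theorem3p1:
  fixes p \<beta> :: real and n k :: nat
  assumes "0 < p" "p < 1" "1 \<le> n" "k < 3 ^ n"
  shows "\<exists>R :: real poly. degree R = 3 ^ n \<and>
     (\<forall>l. n \<le> l \<longrightarrow>
        sigma_H p \<beta> (real k / 3 ^ n) 0 l =
          poly_preimage R (sigma_Lap p (l - n) - sigma_Lap p 0)
          \<union> sigma_H p \<beta> (real k / 3 ^ n) 0 n) \<and>
     (n = 1 \<and> k \<in> {1, 2} \<longrightarrow>
        (\<forall>z. poly R z =
           ((- \<beta> + 2 * p - 2 * z) *
            (\<beta>^2 + 2 * \<beta> * p + \<beta> * z - 2 * p * z - 2 * p - 2 * z^2 + 2))
           / (4 * p * (1 - p))))"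
proof -
  define N where "N = (3::nat) ^ n"
  define Pp where "Pp = trp (aF p) (bF p) (VF \<beta> k n) 1 0 N"
  define Qp where "Qp = trp (aF p) (bF p) (VF \<beta> k n) 0 1 N"
  define R where "R = (1 - Pp) - [:\<beta>, -1:] * Qp"
  have N3: "3 \<le> N" unfolding N_def using power_increasing[of 1 n "3::nat"] assms(3) by simp
  have degR: "degree R = N"
  proof -
    have bnz: "\<And>y. 0 < y \<Longrightarrow> bF p y \<noteq> 0" using abF_pos[OF assms(1,2)] by (metis less_irrefl)
    have Q: "degree Qp = N - 1" "Qp \<noteq> 0" unfolding Qp_def using trp_Q_deg[OF bnz, where y = N] N3 by auto
    define X where "X = [:\<beta>, -1:] * Qp"
    have d1: "degree X = N" unfolding X_def using Q N3 by (subst degree_mult_eq) auto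
    have "degree Pp \<le> N - 2" unfolding Pp_def by (rule trp_P_deg)
    then have d2: "degree (1 - Pp) < N" using N3 degree_diff_le[of 1 "N - 2" Pp] by simp
    have "R = (1 - Pp) + - X" unfolding R_def X_def by (simp only: diff_conv_add_uminus)
    moreover have "degree ((1 - Pp) + - X) = degree (- X)"
      by (rule degree_add_eq_right) (simp only: degree_minus d1 d2)
    ultimately show ?thesis using d1 by simp
  qed
  have evR: "evc R z = 1 - ((complex_of_real \<beta> - z) * tr (cr (aF p)) (cr (bF p)) (cr (VF \<beta> k n)) z 0 1 N
               + tr (cr (aF p)) (cr (bF p)) (cr (VF \<beta> k n)) z 1 0 N)" for z
    unfolding R_def Pp_def Qp_def
    by (simp only: evc_diff evc_mult evc_lin evc_1 evc_0 trp_eval) (simp add: algebra_simps)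
  have setq: "sigma_H p \<beta> (real k / 3 ^ n) 0 l =
          poly_preimage R (sigma_Lap p (l - n) - sigma_Lap p 0) \<union> sigma_H p \<beta> (real k / 3 ^ n) 0 n"
    if l: "n \<le> l" for l
  proof (intro set_eqI)
    fix z
    let ?rho = "(complex_of_real \<beta> - z) * tr (cr (aF p)) (cr (bF p)) (cr (VF \<beta> k n)) z 0 1 N
               + tr (cr (aF p)) (cr (bF p)) (cr (VF \<beta> k n)) z 1 0 N"
    let ?G = "tr (cr (aF p)) (cr (bF p)) (cr (VF \<beta> k n)) z 0 1 N * (complex_of_real \<beta> - z) ^ 2
      + 2 * tr (cr (aF p)) (cr (bF p)) (cr (VF \<beta> k n)) z 1 0 N * (complex_of_real \<beta> - z)
      - tr (cr (aF p)) (cr (bF p)) (cr (VF \<beta> k n)) z 1 0 (N - 1)"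
    have sl: "z \<in> sigma_H p \<beta> (real k / 3 ^ n) 0 l \<longleftrightarrow> ((1 - ?rho \<in> sigma_Lap p (l - n) \<and> ?rho ^ 2 \<noteq> 1) \<or> ?G = 0)"
      using spec_char[OF assms(1,2,3) l, where \<beta> = \<beta> and k = k and z = z] unfolding N_def by simp
    have sn: "z \<in> sigma_H p \<beta> (real k / 3 ^ n) 0 n \<longleftrightarrow> ((1 - ?rho \<in> sigma_Lap p 0 \<and> ?rho ^ 2 \<noteq> 1) \<or> ?G = 0)"
      using spec_char[OF assms(1,2,3) order_refl, where \<beta> = \<beta> and k = k and z = z] unfolding N_def by simp
    have r2: "1 - ?rho \<in> {0, 2} \<longleftrightarrow> ?rho ^ 2 = 1"
    proof -
      have "1 - ?rho \<in> {0, 2} \<longleftrightarrow> ?rho = 1 \<or> ?rho = -1" by (auto simp: algebra_simps)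
      also have "\<dots> \<longleftrightarrow> ?rho ^ 2 = 1" by (rule power2_eq_1_iff[symmetric])
      finally show ?thesis .
    qed
    have sn': "z \<in> sigma_H p \<beta> (real k / 3 ^ n) 0 n \<longleftrightarrow> ?G = 0"
      using sn r2 unfolding sigma_Lap0 by blast
    have pre: "z \<in> poly_preimage R (sigma_Lap p (l - n) - sigma_Lap p 0) \<longleftrightarrow>
        (1 - ?rho \<in> sigma_Lap p (l - n) \<and> ?rho ^ 2 \<noteq> 1)"
      unfolding poly_preimage_def evR sigma_Lap0 using r2 by blast
    show "z \<in> sigma_H p \<beta> (real k / 3 ^ n) 0 l \<longleftrightarrow>
      z \<in> poly_preimage R (sigma_Lap p (l - n) - sigma_Lap p 0) \<union> sigma_H p \<beta> (real k / 3 ^ n) 0 n"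
      using sl sn' pre by blast
  qed
  have cubic: "\<forall>z. poly R z =
           ((- \<beta> + 2 * p - 2 * z) *
            (\<beta>^2 + 2 * \<beta> * p + \<beta> * z - 2 * p * z - 2 * p - 2 * z^2 + 2))
           / (4 * p * (1 - p))" if h: "n = 1 \<and> k \<in> {1, 2}"
  proof
    fix z :: real
    have n1: "n = 1" and kk: "k \<in> {1, 2}" using h by auto
    have N3': "N = Suc (Suc (Suc 0))" unfolding N_def n1 by simp
    have a1: "aF p (Suc 0) = 1 - p" and b1: "bF p (Suc 0) = p" and a2: "aF p (Suc (Suc 0)) = p" and b2: "bF p (Suc (Suc 0)) = 1 - p"
      using rr1 rr2 by (simp_all add: aF_eq bF_eq numeral_2_eq_2)
    have V1: "VF \<beta> k n (Suc 0) = - \<beta> / 2" and V2: "VF \<beta> k n (Suc (Suc 0)) = - \<beta> / 2"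
      using VF_vals[OF kk] n1 by (auto simp: numeral_2_eq_2)
    have p0: "p \<noteq> 0" "1 - p \<noteq> 0" using assms(1,2) by auto
    have Pz: "poly Pp z * p = \<beta> / 2 + z"
      unfolding Pp_def N3' using Pz_lem[OF p0(1) p0(2) a1 b1 a2 b2 V1 V2] .
    have Qz: "poly Qp z * (p * (1 - p)) = (\<beta> / 2 + z) ^ 2 - p ^ 2"
      unfolding Qp_def N3' using Qz_lem[OF p0(1) p0(2) a1 b1 a2 b2 V1 V2] .
    have Rz: "poly R z = 1 - poly Pp z - (\<beta> - z) * poly Qp z" unfolding R_def by (simp add: algebra_simps)
    have "poly R z * (4 * p * (1 - p)) = 4 * p * (1 - p) - 4 * (1 - p) * (poly Pp z * p) - 4 * (\<beta> - z) * (poly Qp z * (p * (1 - p)))"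
      unfolding Rz by (simp add: algebra_simps)
    also have "\<dots> = (- \<beta> + 2 * p - 2 * z) *
            (\<beta>^2 + 2 * \<beta> * p + \<beta> * z - 2 * p * z - 2 * p - 2 * z^2 + 2)"
      by (rule fin[OF Pz Qz])
    finally have "poly R z * (4 * p * (1 - p)) = (- \<beta> + 2 * p - 2 * z) *
            (\<beta>^2 + 2 * \<beta> * p + \<beta> * z - 2 * p * z - 2 * p - 2 * z^2 + 2)" .
    moreover have "4 * p * (1 - p) \<noteq> 0" using p0 by simp
    ultimately have "poly R z = ((- \<beta> + 2 * p - 2 * z) *
            (\<beta>^2 + 2 * \<beta> * p + \<beta> * z - 2 * p * z - 2 * p - 2 * z^2 + 2))
           / (4 * p * (1 - p))" by (simp add: eq_divide_eq)
    then show "poly R z = ((- \<beta> + 2 * p - 2 * z) *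
            (\<beta>^2 + 2 * \<beta> * p + \<beta> * z - 2 * p * z - 2 * p - 2 * z^2 + 2))
           / (4 * p * (1 - p))" .
  qed
  show ?thesis
  proof (intro exI[of _ R] conjI)
    show "degree R = 3 ^ n" using degR unfolding N_def .
    show "\<forall>l. n \<le> l \<longrightarrow> sigma_H p \<beta> (real k / 3 ^ n) 0 l =
          poly_preimage R (sigma_Lap p (l - n) - sigma_Lap p 0) \<union> sigma_H p \<beta> (real k / 3 ^ n) 0 n"
      using setq by blast
    show "n = 1 \<and> k \<in> {1, 2} \<longrightarrow>
        (\<forall>z. poly R z =
           ((- \<beta> + 2 * p - 2 * z) *
            (\<beta>^2 + 2 * \<beta> * p + \<beta> * z - 2 * p * z - 2 * p - 2 * z^2 + 2))
           / (4 * p * (1 - p)))"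
      using cubic by blast
  qed
qed


end
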